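(* For every strongly normalisable $\lambda\mu$-term $M$ (i.e. $M\in\mathrm{SN}$) there exist a restricted basis $\Gamma$, a restricted name context $\Delta$ and a restricted term type $\delta$ such that $\Gamma \vdash_{R} M : \delta \mid \Delta$ is derivable in the restricted intersection type system.
   Context: Terms of Parigot's untyped $\lambda\mu$-calculus: $M ::= x \mid \lambda x.M \mid MN \mid \mu\alpha.C$, commands $C ::= [\alpha]M$, with reduction the compatible closure of $(\lambda x.M)N \to M[N/x]$ and $(\mu\alpha.C)N \to \mu\alpha.C[\alpha \Leftarrow N]$ (structural substitution: every subcommand $[\alpha]P$ becomes $[\alpha]P'N$); the renaming rule $[\alpha]\mu\beta.C\to C[\alpha/\beta]$ is ignored here, which does not change the set of strongly normalisable terms. $\mathrm{SN}$ is the set of terms admitting no infinite reduction sequence. Restricted types: with a single type constant $\varphi$, term types $\delta ::= \kappa\to\varphi \mid \delta\wedge\delta$ and continuation types $\kappa ::= \omega \mid \delta\times\kappa \mid \kappa\wedge\kappa$, pre-ordered by the least intersection type theory ($\wedge$ is the meet) with $\kappa\le\omega$, $(\delta_1\times\kappa_1)\wedge(\delta_2\times\kappa_2)\le(\delta_1\wedge\delta_2)\times(\kappa_1\wedge\kappa_2)$, $\times$ covariant in both arguments, and $\kappa_1\to\varphi\le\kappa_2\to\varphi$ whenever $\kappa_2\le\kappa_1$. A restricted basis $\Gamma$ maps finitely many term variables to restricted term types; a restricted name context $\Delta$ maps finitely many names to restricted continuation types ($\Delta(\alpha)=\omega$ if $\alpha$ is not declared). $\Gamma\vdash_R T:\sigma\mid\Delta$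 means derivable, with all judgements restricted and without the rule assigning $\omega$ to arbitrary terms, using the rules: (Ax) $\Gamma,x{:}\delta\vdash x:\delta\mid\Delta$; (Abs) from $\Gamma,x{:}\delta\vdash M:\kappa\to\varphi\mid\Delta$ infer $\Gamma\vdash\lambda x.M:\delta\times\kappa\to\varphi\mid\Delta$; (App) from $\Gamma\vdash M:\delta\times\kappa\to\varphi\mid\Delta$ and $\Gamma\vdash N:\delta\mid\Delta$ infer $\Gamma\vdash MN:\kappa\to\varphi\mid\Delta$; (Cmd) from $\Gamma\vdash M:\delta\mid\Delta$ infer $\Gamma\vdash[\alpha]M:\delta\times\Delta(\alpha)\mid\Delta$; ($\mu$) from $\Gamma\vdash C:(\kappa'\to\varphi)\times\kappa'\mid\alpha{:}\kappa,\Delta$ infer $\Gamma\vdash\mu\alpha.C:\kappa\to\varphi\mid\Delta$; plus intersection introduction ($\wedge$) and subsumption ($\le$). *)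

theory Defs
  imports Main
begin

text \<open>Term variables and names live in two separate de Bruijn index spaces.
  Lam binds term variable 0, Mu binds name 0.  Cmd a M is the command [a]M.\<close>

datatype trm = Var nat | Lam trm | App trm trm | Mu cmd
     and cmd = Cmd nat trm

primrec lift_t :: "nat \<Rightarrow> trm \<Rightarrow> trm" and lift_tc :: "nat \<Rightarrow> cmd \<Rightarrow> cmd" where
  "lift_t k (Var i) = Var (if i < k then i else Suc i)"
| "lift_t k (Lam M) = Lam (lift_t (Suc k) M)"
| "lift_t k (App M N) = App (lift_t k M) (lift_t k N)"
| "lift_t k (Mu C) = Mu (lift_tc k C)"
| "lift_tc k (Cmd a M) = Cmd a (lift_t k M)"

primrec lift_n :: "nat \<Rightarrow> trm \<Rightarrow> trm" and lift_nc :: "nat \<Rightarrow> cmd \<Rightarrow> cmd" where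
  "lift_n k (Var i) = Var i"
| "lift_n k (Lam M) = Lam (lift_n k M)"
| "lift_n k (App M N) = App (lift_n k M) (lift_n k N)"
| "lift_n k (Mu C) = Mu (lift_nc (Suc k) C)"
| "lift_nc k (Cmd a M) = Cmd (if a < k then a else Suc a) (lift_n k M)"

primrec subst :: "trm \<Rightarrow> nat \<Rightarrow> trm \<Rightarrow> trm" and subst_c :: "cmd \<Rightarrow> nat \<Rightarrow> trm \<Rightarrow> cmd" where
  "subst (Var i) k N = (if i < k then Var i else if i = k then N else Var (i - 1))"
| "subst (Lam M) k N = Lam (subst M (Suc k) (lift_t 0 N))"
| "subst (App M P) k N = App (subst M k N) (subst P k N)"
| "subst (Mu C) k N = Mu (subst_c C k (lift_n 0 N))"
| "subst_c (Cmd a M) k N = Cmd a (subst M k N)"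

text \<open>Structural substitution M[k \<Leftarrow> N]: every subcommand [k]P becomes [k](P' N).\<close>
primrec ssubst :: "trm \<Rightarrow> nat \<Rightarrow> trm \<Rightarrow> trm" and ssubst_c :: "cmd \<Rightarrow> nat \<Rightarrow> trm \<Rightarrow> cmd" where
  "ssubst (Var i) k N = Var i"
| "ssubst (Lam M) k N = Lam (ssubst M k (lift_t 0 N))"
| "ssubst (App M P) k N = App (ssubst M k N) (ssubst P k N)"
| "ssubst (Mu C) k N = Mu (ssubst_c C (Suc k) (lift_n 0 N))"
| "ssubst_c (Cmd a M) k N =
     (if a = k then Cmd a (App (ssubst M k N) N) else Cmd a (ssubst M k N))"

inductive red_t :: "trm \<Rightarrow> trm \<Rightarrow> bool" and red_c :: "cmd \<Rightarrow> cmd \<Rightarrow> bool" where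
  beta: "red_t (App (Lam M) N) (subst M 0 N)"
| mu: "red_t (App (Mu C) N) (Mu (ssubst_c C 0 (lift_n 0 N)))"
| lam: "red_t M M' \<Longrightarrow> red_t (Lam M) (Lam M')"
| appL: "red_t M M' \<Longrightarrow> red_t (App M N) (App M' N)"
| appR: "red_t N N' \<Longrightarrow> red_t (App M N) (App M N')"
| muC: "red_c C C' \<Longrightarrow> red_t (Mu C) (Mu C')"
| cmd: "red_t M M' \<Longrightarrow> red_c (Cmd a M) (Cmd a M')"

definition SN :: "trm \<Rightarrow> bool" where
  "SN M \<longleftrightarrow> \<not> (\<exists>f. f 0 = M \<and> (\<forall>i. red_t (f i) (f (Suc i))))"

text \<open>Term types  \<delta> ::= \<kappa>\<rightarrow>\<phi> | \<delta>\<and>\<delta>;  continuation types \<kappa> ::= \<omega> | \<delta>\<times>\<kappa> | \<kappa>\<and>\<kappa>.\<close>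
datatype ttype = TArr ctype | TInt ttype ttype
     and ctype = Omega | Prod ttype ctype | CInt ctype ctype

inductive sub_t :: "ttype \<Rightarrow> ttype \<Rightarrow> bool" and sub_c :: "ctype \<Rightarrow> ctype \<Rightarrow> bool" where
  t_refl: "sub_t d d"
| t_trans: "sub_t d1 d2 \<Longrightarrow> sub_t d2 d3 \<Longrightarrow> sub_t d1 d3"
| t_inter1: "sub_t (TInt d1 d2) d1"
| t_inter2: "sub_t (TInt d1 d2) d2"
| t_glb: "sub_t d d1 \<Longrightarrow> sub_t d d2 \<Longrightarrow> sub_t d (TInt d1 d2)"
| t_arr: "sub_c k2 k1 \<Longrightarrow> sub_t (TArr k1) (TArr k2)"
| c_refl: "sub_c k k"
| c_trans: "sub_c k1 k2 \<Longrightarrow> sub_c k2 k3 \<Longrightarrow> sub_c k1 k3"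
| c_inter1: "sub_c (CInt k1 k2) k1"
| c_inter2: "sub_c (CInt k1 k2) k2"
| c_glb: "sub_c k k1 \<Longrightarrow> sub_c k k2 \<Longrightarrow> sub_c k (CInt k1 k2)"
| c_omega: "sub_c k Omega"
| c_prod_dist: "sub_c (CInt (Prod d1 k1) (Prod d2 k2)) (Prod (TInt d1 d2) (CInt k1 k2))"
| c_prod: "sub_t d1 d2 \<Longrightarrow> sub_c k1 k2 \<Longrightarrow> sub_c (Prod d1 k1) (Prod d2 k2)"

type_synonym basis = "nat \<rightharpoonup> ttype"
type_synonym namectx = "nat \<rightharpoonup> ctype"

definition dget :: "namectx \<Rightarrow> nat \<Rightarrow> ctype" where
  "dget D a = (case D a of None \<Rightarrow> Omega | Some k \<Rightarrow> k)"

definition cons_ctx :: "'a \<Rightarrow> (nat \<rightharpoonup> 'a) \<Rightarrow> (nat \<rightharpoonup> 'a)" where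
  "cons_ctx x G = (\<lambda>n. case n of 0 \<Rightarrow> Some x | Suc m \<Rightarrow> G m)"

inductive typ_t :: "basis \<Rightarrow> trm \<Rightarrow> ttype \<Rightarrow> namectx \<Rightarrow> bool"
      and typ_c :: "basis \<Rightarrow> cmd \<Rightarrow> ctype \<Rightarrow> namectx \<Rightarrow> bool" where
  Ax: "G x = Some d \<Longrightarrow> typ_t G (Var x) d D"
| Abs: "typ_t (cons_ctx d G) M (TArr k) D \<Longrightarrow> typ_t G (Lam M) (TArr (Prod d k)) D"
| App: "typ_t G M (TArr (Prod d k)) D \<Longrightarrow> typ_t G N d D \<Longrightarrow> typ_t G (App M N) (TArr k) D"
| CmdR: "typ_t G M d D \<Longrightarrow> typ_c G (Cmd a M) (Prod d (dget D a)) D"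
| MuR: "typ_c G C (Prod (TArr k') k') (cons_ctx k D) \<Longrightarrow> typ_t G (Mu C) (TArr k) D"
| IntT: "typ_t G M d1 D \<Longrightarrow> typ_t G M d2 D \<Longrightarrow> typ_t G M (TInt d1 d2) D"
| IntC: "typ_c G C k1 D \<Longrightarrow> typ_c G C k2 D \<Longrightarrow> typ_c G C (CInt k1 k2) D"
| SubT: "typ_t G M d D \<Longrightarrow> sub_t d d' \<Longrightarrow> typ_t G M d' D"
| SubC: "typ_c G C k D \<Longrightarrow> sub_c k k' \<Longrightarrow> typ_c G C k' D"

end

theory Submission
  imports Defs
begin

definition ccons :: "ctype \<Rightarrow> (nat \<Rightarrow> ctype) \<Rightarrow> nat \<Rightarrow> ctype" where
  "ccons k D = (\<lambda>n. case n of 0 \<Rightarrow> k | Suc m \<Rightarrow> D m)"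

lemma ccons_0[simp]: "ccons k D 0 = k" and ccons_Suc[simp]: "ccons k D (Suc m) = D m"
  by (simp_all add: ccons_def)

lemma cons_ctx_0[simp]: "cons_ctx k G 0 = Some k" and cons_ctx_Suc[simp]: "cons_ctx k G (Suc m) = G m"
  by (simp_all add: cons_ctx_def)

inductive typS :: "basis \<Rightarrow> trm \<Rightarrow> ttype \<Rightarrow> (nat \<Rightarrow> ctype) \<Rightarrow> bool" where
  SVar: "G x = Some s \<Longrightarrow> sub_t s (TArr k) \<Longrightarrow> typS G (Var x) (TArr k) D"
| SAbs: "typS (cons_ctx s G) M (TArr k) D \<Longrightarrow> typS G (Lam M) (TArr (Prod s k)) D"
| SApp: "typS G M (TArr (Prod s k)) D \<Longrightarrow> typS G N s D \<Longrightarrow> typS G (App M N) (TArr k) D"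
| SMu: "typS G M (TArr k') (ccons k D) \<Longrightarrow> sub_c (ccons k D a) k' \<Longrightarrow> typS G (Mu (Cmd a M)) (TArr k) D"
| SInt: "typS G M t1 D \<Longrightarrow> typS G M t2 D \<Longrightarrow> typS G M (TInt t1 t2) D"

inductive_cases typS_IntE: "typS G M (TInt t1 t2) D"
inductive_cases typS_LamE: "typS G (Lam M) (TArr k) D"
inductive_cases typS_AppE: "typS G (App M N) (TArr k) D"
inductive_cases typS_MuE: "typS G (Mu C) (TArr k) D"

lemma typS_int: "typS G M (TInt t1 t2) D \<Longrightarrow> typS G M t1 D \<and> typS G M t2 D"
  by (erule typS_IntE) auto

lemma int_closure:
  assumes "\<And>kk. typS G X (TArr kk) D \<Longrightarrow> Q (TArr kk)"
    and "\<And>t1 t2. Q t1 \<Longrightarrow> Q t2 \<Longrightarrow> Q (TInt t1 t2)"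
  shows "typS G X t D \<Longrightarrow> Q t"
  using assms(1) by (induction t) (auto dest: typS_int intro: assms(2))

lemma var_inv: "typS G X t D \<Longrightarrow> X = Var i \<Longrightarrow> \<exists>s. G i = Some s \<and> sub_t s t"
  by (induction rule: typS.induct) (auto intro: sub_t_sub_c.t_glb)

lemma var_any: "G i = Some s \<Longrightarrow> sub_t s t \<Longrightarrow> typS G (Var i) t D"
  by (induction t) (auto intro: SVar SInt sub_t_sub_c.t_trans sub_t_sub_c.t_inter1 sub_t_sub_c.t_inter2)

lemma has_arr: "typS G M t D \<Longrightarrow> \<exists>k. typS G M (TArr k) D"
  by (induction t) (auto dest: typS_int)

lemma dget_cons_0[simp]: "dget (cons_ctx k D) 0 = k" and dget_cons_Suc[simp]: "dget (cons_ctx k D) (Suc m) = dget D m"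
  by (simp_all add: dget_def cons_ctx_def)

lemma sound: "typS G M t Dn \<Longrightarrow> (\<forall>a. sub_c (dget D a) (Dn a)) \<Longrightarrow> typ_t G M t D"
proof (induction arbitrary: D rule: typS.induct)
  case (SVar G x s k D)
  then show ?case by (meson Ax SubT)
next
  case (SAbs s G M k D)
  then show ?case by (simp add: Abs)
next
  case (SApp G M s k D N)
  then show ?case by (meson App)
next
  case (SMu G M k' k Dn a D)
  have hb: "\<forall>b. sub_c (dget (cons_ctx k D) b) (ccons k Dn b)"
    using SMu.prems by (auto simp: split: nat.split intro: sub_t_sub_c.c_refl)
     (metis ccons_0 ccons_Suc dget_cons_0 dget_cons_Suc not0_implies_Suc sub_t_sub_c.c_refl)
  then have "typ_t G M (TArr k') (cons_ctx k D)" using SMu.IH by blast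
  then have c: "typ_c G (Cmd a M) (Prod (TArr k') (dget (cons_ctx k D) a)) (cons_ctx k D)"
    by (rule CmdR)
  have "sub_c (dget (cons_ctx k D) a) k'"
    using SMu.hyps(2) hb sub_t_sub_c.c_trans by blast
  then have "typ_c G (Cmd a M) (Prod (TArr k') k') (cons_ctx k D)"
    using c by (meson SubC sub_t_sub_c.c_prod sub_t_sub_c.t_refl)
  then show ?case by (rule MuR)
next
  case (SInt G M t1 D t2)
  then show ?case by (simp add: IntT)
qed


definition shift :: "nat \<Rightarrow> nat \<Rightarrow> nat" where
  "shift k n = (if n < k then n else Suc n)"

lemma cons_shift: "(\<lambda>n. cons_ctx s G (shift (Suc k) n)) = cons_ctx s (\<lambda>n. G (shift k n))"
  by (rule ext, simp add: shift_def cons_ctx_def split: nat.split)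

lemma ccons_shift: "(\<lambda>n. ccons s D (shift (Suc k) n)) = ccons s (\<lambda>n. D (shift k n))"
  by (rule ext, simp add: shift_def ccons_def split: nat.split)

lemma ccons_shift_a: "ccons s D (shift (Suc k) a) = ccons s (\<lambda>n. D (shift k n)) a"
  using ccons_shift[of s D k] by metis

lemma lift_t_VarE: "lift_t k N = Var x \<Longrightarrow> \<exists>y. N = Var y \<and> x = shift k y"
  by (cases N) (auto simp: shift_def)
lemma lift_t_LamE: "lift_t k N = Lam M \<Longrightarrow> \<exists>N1. N = Lam N1 \<and> M = lift_t (Suc k) N1"
  by (cases N) auto
lemma lift_t_AppE: "lift_t k N = App M1 M2 \<Longrightarrow> \<exists>N1 N2. N = App N1 N2 \<and> M1 = lift_t k N1 \<and> M2 = lift_t k N2"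
  by (cases N) auto
lemma lift_t_MuE: "lift_t k N = Mu (Cmd a M) \<Longrightarrow> \<exists>N1. N = Mu (Cmd a N1) \<and> M = lift_t k N1"
  apply (cases N) apply auto subgoal for C by (cases C) auto done

lemma lift_n_VarE: "lift_n k N = Var x \<Longrightarrow> N = Var x"
  by (cases N) auto
lemma lift_n_LamE: "lift_n k N = Lam M \<Longrightarrow> \<exists>N1. N = Lam N1 \<and> M = lift_n k N1"
  by (cases N) auto
lemma lift_n_AppE: "lift_n k N = App M1 M2 \<Longrightarrow> \<exists>N1 N2. N = App N1 N2 \<and> M1 = lift_n k N1 \<and> M2 = lift_n k N2"
  by (cases N) auto
lemma lift_n_MuE: "lift_n k N = Mu (Cmd a M) \<Longrightarrow> \<exists>a0 N1. N = Mu (Cmd a0 N1) \<and> M = lift_n (Suc k) N1 \<and> a = shift (Suc k) a0"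
  apply (cases N) apply auto subgoal for C by (cases C) (auto simp: shift_def) done

lemma bwd_t: "typS G' X t D \<Longrightarrow> X = lift_t k N \<Longrightarrow> typS (\<lambda>n. G' (shift k n)) N t D"
proof (induction arbitrary: k N rule: typS.induct)
  case (SVar G x s kk D)
  then show ?case by (auto dest!: lift_t_VarE[OF sym] intro: typS.SVar)
next
  case (SAbs s G M kk D)
  obtain N1 where "N = Lam N1" "M = lift_t (Suc k) N1" using lift_t_LamE[OF sym[OF SAbs.prems]] by blast
  with SAbs.IH[of "Suc k" N1] show ?case by (simp add: cons_shift typS.SAbs)
next
  case (SApp G M s kk D P)
  obtain N1 N2 where "N = App N1 N2" "M = lift_t k N1" "P = lift_t k N2"
    using lift_t_AppE[OF sym[OF SApp.prems]] by blast
  with SApp.IH(1)[of k N1] SApp.IH(2)[of k N2] show ?case by (simp add: typS.SApp)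
next
  case (SMu G M k' kk D a)
  obtain N1 where "N = Mu (Cmd a N1)" "M = lift_t k N1" using lift_t_MuE[OF sym[OF SMu.prems]] by blast
  with SMu.IH[of k N1] SMu.hyps(2) show ?case by (simp add: typS.SMu)
next
  case (SInt G M t1 D t2)
  then show ?case by (auto intro: typS.SInt)
qed

lemma bwd_n: "typS G X t D' \<Longrightarrow> X = lift_n k N \<Longrightarrow> typS G N t (\<lambda>n. D' (shift k n))"
proof (induction arbitrary: k N rule: typS.induct)
  case (SVar G x s kk D)
  then show ?case by (auto dest!: lift_n_VarE[OF sym] intro: typS.SVar)
next
  case (SAbs s G M kk D)
  obtain N1 where "N = Lam N1" "M = lift_n k N1" using lift_n_LamE[OF sym[OF SAbs.prems]] by blast
  with SAbs.IH[of k N1] show ?case by (simp add: typS.SAbs)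
next
  case (SApp G M s kk D P)
  obtain N1 N2 where "N = App N1 N2" "M = lift_n k N1" "P = lift_n k N2"
    using lift_n_AppE[OF sym[OF SApp.prems]] by blast
  with SApp.IH(1)[of k N1] SApp.IH(2)[of k N2] show ?case by (simp add: typS.SApp)
next
  case (SMu G M k' kk D a)
  obtain a0 N1 where e: "N = Mu (Cmd a0 N1)" "M = lift_n (Suc k) N1" "a = shift (Suc k) a0"
    using lift_n_MuE[OF sym[OF SMu.prems]] by blast
  have "typS G N1 (TArr k') (ccons kk (\<lambda>n. D (shift k n)))"
    using SMu.IH[OF e(2)] by (simp add: ccons_shift)
  moreover have "sub_c (ccons kk (\<lambda>n. D (shift k n)) a0) k'"
    using SMu.hyps(2) e(3) by (simp add: ccons_shift_a)
  ultimately show ?case using e(1) by (simp add: typS.SMu)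
next
  case (SInt G M t1 D t2)
  then show ?case by (auto intro: typS.SInt)
qed

lemma shift0_cons: "(\<lambda>n. cons_ctx s G (shift 0 n)) = G"
  by (simp add: shift_def)
lemma shift0_ccons: "(\<lambda>n. ccons s D (shift 0 n)) = D"
  by (simp add: shift_def)

lemma bwd_t0: "typS (cons_ctx s G) (lift_t 0 N) t D \<Longrightarrow> typS G N t D"
  using bwd_t[of "cons_ctx s G" "lift_t 0 N" t D 0 N] by (simp add: shift0_cons)
lemma bwd_n0: "typS G (lift_n 0 N) t (ccons s D) \<Longrightarrow> typS G N t D"
  using bwd_n[of G "lift_n 0 N" t "ccons s D" 0 N] by (simp add: shift0_ccons)

definition gle :: "basis \<Rightarrow> basis \<Rightarrow> bool" where
  "gle G' G \<longleftrightarrow> (\<forall>x s. G x = Some s \<longrightarrow> (\<exists>s'. G' x = Some s' \<and> sub_t s' s))"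

lemma gle_cons: "gle G' G \<Longrightarrow> gle (cons_ctx s G') (cons_ctx s G)"
  unfolding gle_def by (auto simp: cons_ctx_def split: nat.split intro: sub_t_sub_c.t_refl)

lemma mono: "typS G M t D \<Longrightarrow> gle G' G \<Longrightarrow> (\<forall>a. sub_c (D' a) (D a)) \<Longrightarrow> typS G' M t D'"
proof (induction arbitrary: G' D' rule: typS.induct)
  case (SVar G x s k D)
  then show ?case unfolding gle_def by (meson typS.SVar sub_t_sub_c.t_trans)
next
  case (SAbs s G M k D)
  then show ?case by (meson gle_cons typS.SAbs)
next
  case (SApp G M s k D N)
  then show ?case by (meson typS.SApp)
next
  case (SMu G M k' k D a)
  have h: "\<forall>b. sub_c (ccons k D' b) (ccons k D b)"
    using SMu.prems(2) by (auto simp: ccons_def split: nat.split intro: sub_t_sub_c.c_refl)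
  then show ?case using SMu by (meson typS.SMu sub_t_sub_c.c_trans)
next
  case (SInt G M t1 D t2)
  then show ?case by (meson typS.SInt)
qed


definition ins :: "nat \<Rightarrow> ttype \<Rightarrow> basis \<Rightarrow> basis" where
  "ins k s G = (\<lambda>n. if n < k then G n else if n = k then Some s else G (n - 1))"

lemma ins0: "ins 0 s G = cons_ctx s G"
  by (rule ext) (simp add: ins_def cons_ctx_def split: nat.split)

lemma ins_cons: "ins (Suc k) s (cons_ctx s' G) = cons_ctx s' (ins k s G)"
  by (rule ext) (simp add: ins_def cons_ctx_def split: nat.split)

definition invQ :: "basis \<Rightarrow> trm \<Rightarrow> (nat \<Rightarrow> ctype) \<Rightarrow> (ttype \<Rightarrow> ttype \<Rightarrow> bool) \<Rightarrow> ttype \<Rightarrow> bool" where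
  "invQ G N D P t \<longleftrightarrow> (\<exists>S. (\<forall>s\<in>set S. typS G N s D) \<and> (\<forall>\<sigma>. (\<forall>s\<in>set S. sub_t \<sigma> s) \<longrightarrow> P \<sigma> t))"

lemma invQ_int:
  assumes "\<And>\<sigma> t1 t2. P \<sigma> t1 \<Longrightarrow> P \<sigma> t2 \<Longrightarrow> P \<sigma> (TInt t1 t2)"
    and "invQ G N D P t1" "invQ G N D P t2"
  shows "invQ G N D P (TInt t1 t2)"
proof -
  obtain S1 where 1: "\<forall>s\<in>set S1. typS G N s D" "\<forall>\<sigma>. (\<forall>s\<in>set S1. sub_t \<sigma> s) \<longrightarrow> P \<sigma> t1"
    using assms(2) unfolding invQ_def by blast
  obtain S2 where 2: "\<forall>s\<in>set S2. typS G N s D" "\<forall>\<sigma>. (\<forall>s\<in>set S2. sub_t \<sigma> s) \<longrightarrow> P \<sigma> t2"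
    using assms(3) unfolding invQ_def by blast
  show ?thesis unfolding invQ_def
    by (rule exI[of _ "S1 @ S2"]) (use 1 2 assms(1) in auto)
qed

lemma invQ_closure:
  assumes "typS G X t D"
    and "\<And>kk. typS G X (TArr kk) D \<Longrightarrow> invQ G' N D' P (TArr kk)"
    and "\<And>\<sigma> t1 t2. P \<sigma> t1 \<Longrightarrow> P \<sigma> t2 \<Longrightarrow> P \<sigma> (TInt t1 t2)"
  shows "invQ G' N D' P t"
  using int_closure[of G X D "invQ G' N D' P", OF assms(2)] assms(1,3) invQ_int by blast

lemma inv_subst:
  "\<forall>G D t k N. typS G (subst M k N) t D \<longrightarrow> invQ G N D (\<lambda>\<sigma> t. typS (ins k \<sigma> G) M t D) t"
proof (induction M rule: measure_induct_rule[of size])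
  case (less M)
  show ?case
  proof (intro allI impI)
    fix G D t k N
    assume H: "typS G (subst M k N) t D"
    let ?P = "\<lambda>\<sigma> t. typS (ins k \<sigma> G) M t D"
    have PI: "\<And>\<sigma> t1 t2. ?P \<sigma> t1 \<Longrightarrow> ?P \<sigma> t2 \<Longrightarrow> ?P \<sigma> (TInt t1 t2)" by (simp add: SInt)
    show "invQ G N D ?P t"
    proof (cases M)
      case (Var i)
      show ?thesis
      proof (cases "i = k")
        case True
        then have "typS G N t D" using H Var by simp
        then show ?thesis unfolding invQ_def using Var True
          by (intro exI[of _ "[t]"]) (auto intro!: var_any simp: ins_def)
      next
        case False
        obtain j where j: "subst M k N = Var j" "ins k \<sigma> G i = G j" for \<sigma>
          using Var False by (cases "i < k") (auto simp: ins_def)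
        obtain s where "G j = Some s" "sub_t s t" using var_inv[OF H j(1)] by blast
        then show ?thesis unfolding invQ_def using Var j
          by (intro exI[of _ "[]"]) (auto intro!: var_any)
      qed
    next
      case (Lam B)
      have HL: "typS G (Lam (subst B (Suc k) (lift_t 0 N))) t D" using H Lam by simp
      show ?thesis
      proof (rule invQ_closure[where P="?P", OF HL _ PI])
        fix kk assume "typS G (Lam (subst B (Suc k) (lift_t 0 N))) (TArr kk) D"
        then obtain s k0 where e: "kk = Prod s k0" and b: "typS (cons_ctx s G) (subst B (Suc k) (lift_t 0 N)) (TArr k0) D"
          by (rule typS_LamE) blast
        have "invQ (cons_ctx s G) (lift_t 0 N) D (\<lambda>\<sigma> t. typS (ins (Suc k) \<sigma> (cons_ctx s G)) B t D) (TArr k0)"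
          using less[of B] Lam b by simp
        then obtain S where S: "\<forall>s'\<in>set S. typS (cons_ctx s G) (lift_t 0 N) s' D"
          "\<forall>\<sigma>. (\<forall>s'\<in>set S. sub_t \<sigma> s') \<longrightarrow> typS (ins (Suc k) \<sigma> (cons_ctx s G)) B (TArr k0) D"
          unfolding invQ_def by blast
        show "invQ G N D ?P (TArr kk)" unfolding invQ_def
          by (rule exI[of _ S]) (use S e Lam in \<open>auto intro: bwd_t0 SAbs simp: ins_cons\<close>)
      qed
    next
      case (App B1 B2)
      have HA: "typS G (App (subst B1 k N) (subst B2 k N)) t D" using H App by simp
      show ?thesis
      proof (rule invQ_closure[where P="?P", OF HA _ PI])
        fix kk assume "typS G (App (subst B1 k N) (subst B2 k N)) (TArr kk) D"
        then obtain s where b1: "typS G (subst B1 k N) (TArr (Prod s kk)) D" and b2: "typS G (subst B2 k N) s D"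
          by (rule typS_AppE) blast
        obtain S1 where S1: "\<forall>s'\<in>set S1. typS G N s' D"
          "\<forall>\<sigma>. (\<forall>s'\<in>set S1. sub_t \<sigma> s') \<longrightarrow> typS (ins k \<sigma> G) B1 (TArr (Prod s kk)) D"
        proof -
          have "invQ G N D (\<lambda>\<sigma> t. typS (ins k \<sigma> G) B1 t D) (TArr (Prod s kk))"
            using less[of B1] App b1 by simp
          then show ?thesis using that unfolding invQ_def by blast
        qed
        obtain S2 where S2: "\<forall>s'\<in>set S2. typS G N s' D"
          "\<forall>\<sigma>. (\<forall>s'\<in>set S2. sub_t \<sigma> s') \<longrightarrow> typS (ins k \<sigma> G) B2 s D"
        proof -
          have "invQ G N D (\<lambda>\<sigma> t. typS (ins k \<sigma> G) B2 t D) s"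
            using less[of B2] App b2 by simp
          then show ?thesis using that unfolding invQ_def by blast
        qed
        show "invQ G N D ?P (TArr kk)" unfolding invQ_def
          by (rule exI[of _ "S1 @ S2"]) (use S1 S2 App in \<open>auto simp: ball_Un intro!: SApp[where s=s]\<close>)
      qed
    next
      case (Mu C)
      obtain a B where C: "C = Cmd a B" by (cases C)
      have HM: "typS G (Mu (Cmd a (subst B k (lift_n 0 N)))) t D" using H Mu C by simp
      show ?thesis
      proof (rule invQ_closure[where P="?P", OF HM _ PI])
        fix kk assume "typS G (Mu (Cmd a (subst B k (lift_n 0 N)))) (TArr kk) D"
        then obtain k' where b: "typS G (subst B k (lift_n 0 N)) (TArr k') (ccons kk D)"
          and sc: "sub_c (ccons kk D a) k'"
          by (rule typS_MuE) auto
        obtain S where S: "\<forall>s'\<in>set S. typS G (lift_n 0 N) s' (ccons kk D)"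
          "\<forall>\<sigma>. (\<forall>s'\<in>set S. sub_t \<sigma> s') \<longrightarrow> typS (ins k \<sigma> G) B (TArr k') (ccons kk D)"
        proof -
          have "invQ G (lift_n 0 N) (ccons kk D) (\<lambda>\<sigma> t. typS (ins k \<sigma> G) B t (ccons kk D)) (TArr k')"
            using less[of B] Mu C b by simp
          then show ?thesis using that unfolding invQ_def by blast
        qed
        show "invQ G N D ?P (TArr kk)" unfolding invQ_def
          by (rule exI[of _ S]) (use S sc Mu C in \<open>auto intro: SMu bwd_n0\<close>)
      qed
    qed
  qed
qed


lemma ccons_upd: "ccons kk (D(b := x)) = (ccons kk D)(Suc b := x)"
  by (rule ext) (simp add: ccons_def split: nat.split)

lemma var_anyD: "typS G (Var i) t D \<Longrightarrow> typS G (Var i) t D'"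
  using var_inv var_any by blast

lemma inv_ssubst:
  "\<forall>G D t b N. typS G (ssubst M b N) t D \<longrightarrow> invQ G N D (\<lambda>\<sigma> t. typS G M t (D(b := Prod \<sigma> (D b)))) t"
proof (induction M rule: measure_induct_rule[of size])
  case (less M)
  show ?case
  proof (intro allI impI)
    fix G D t b N
    assume H: "typS G (ssubst M b N) t D"
    let ?D = "D(b := Prod \<sigma> (D b))"
    let ?P = "\<lambda>\<sigma> t. typS G M t (D(b := Prod \<sigma> (D b)))"
    have PI: "\<And>\<sigma> t1 t2. ?P \<sigma> t1 \<Longrightarrow> ?P \<sigma> t2 \<Longrightarrow> ?P \<sigma> (TInt t1 t2)" by (simp add: SInt)
    show "invQ G N D ?P t"
    proof (cases M)
      case (Var i)
      then show ?thesis using H unfolding invQ_def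
        by (intro exI[of _ "[]"]) (auto intro: var_anyD)
    next
      case (Lam B)
      have HL: "typS G (Lam (ssubst B b (lift_t 0 N))) t D" using H Lam by simp
      show ?thesis
      proof (rule invQ_closure[where P="?P", OF HL _ PI])
        fix kk assume "typS G (Lam (ssubst B b (lift_t 0 N))) (TArr kk) D"
        then obtain s k0 where e: "kk = Prod s k0" and bb: "typS (cons_ctx s G) (ssubst B b (lift_t 0 N)) (TArr k0) D"
          by (rule typS_LamE) blast
        have "invQ (cons_ctx s G) (lift_t 0 N) D (\<lambda>\<sigma> t. typS (cons_ctx s G) B t (D(b := Prod \<sigma> (D b)))) (TArr k0)"
          using less[OF _, rule_format, OF _ bb] Lam by simp
        then obtain S where S: "\<forall>s'\<in>set S. typS (cons_ctx s G) (lift_t 0 N) s' D"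
          "\<forall>\<sigma>. (\<forall>s'\<in>set S. sub_t \<sigma> s') \<longrightarrow> typS (cons_ctx s G) B (TArr k0) (D(b := Prod \<sigma> (D b)))"
          unfolding invQ_def by blast
        show "invQ G N D ?P (TArr kk)" unfolding invQ_def
          by (rule exI[of _ S]) (use S e Lam in \<open>auto intro: bwd_t0 SAbs\<close>)
      qed
    next
      case (App B1 B2)
      have HA: "typS G (App (ssubst B1 b N) (ssubst B2 b N)) t D" using H App by simp
      show ?thesis
      proof (rule invQ_closure[where P="?P", OF HA _ PI])
        fix kk assume "typS G (App (ssubst B1 b N) (ssubst B2 b N)) (TArr kk) D"
        then obtain s where b1: "typS G (ssubst B1 b N) (TArr (Prod s kk)) D" and b2: "typS G (ssubst B2 b N) s D"
          by (rule typS_AppE) blast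
        obtain S1 where S1: "\<forall>s'\<in>set S1. typS G N s' D"
          "\<forall>\<sigma>. (\<forall>s'\<in>set S1. sub_t \<sigma> s') \<longrightarrow> typS G B1 (TArr (Prod s kk)) (D(b := Prod \<sigma> (D b)))"
        proof -
          have "invQ G N D (\<lambda>\<sigma> t. typS G B1 t (D(b := Prod \<sigma> (D b)))) (TArr (Prod s kk))"
            using less[OF _, rule_format, OF _ b1] App by simp
          then show ?thesis using that unfolding invQ_def by blast
        qed
        obtain S2 where S2: "\<forall>s'\<in>set S2. typS G N s' D"
          "\<forall>\<sigma>. (\<forall>s'\<in>set S2. sub_t \<sigma> s') \<longrightarrow> typS G B2 s (D(b := Prod \<sigma> (D b)))"
        proof -
          have "invQ G N D (\<lambda>\<sigma> t. typS G B2 t (D(b := Prod \<sigma> (D b)))) s"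
            using less[OF _, rule_format, OF _ b2] App by simp
          then show ?thesis using that unfolding invQ_def by blast
        qed
        show "invQ G N D ?P (TArr kk)" unfolding invQ_def
          by (rule exI[of _ "S1 @ S2"]) (use S1 S2 App in \<open>auto simp: ball_Un intro!: SApp[where s=s]\<close>)
      qed
    next
      case (Mu C)
      obtain a B where C: "C = Cmd a B" by (cases C)
      let ?N3 = "lift_n 0 N"
      show ?thesis
      proof (cases "a = Suc b")
        case True
        have HM: "typS G (Mu (Cmd a (App (ssubst B (Suc b) ?N3) ?N3))) t D" using H Mu C True by simp
        show ?thesis
        proof (rule invQ_closure[where P="?P", OF HM _ PI])
          fix kk assume "typS G (Mu (Cmd a (App (ssubst B (Suc b) ?N3) ?N3))) (TArr kk) D"
          then obtain k' where bb: "typS G (App (ssubst B (Suc b) ?N3) ?N3) (TArr k') (ccons kk D)"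
            and sc: "sub_c (ccons kk D a) k'"
            by (rule typS_MuE) auto
          from bb obtain s1 where b1: "typS G (ssubst B (Suc b) ?N3) (TArr (Prod s1 k')) (ccons kk D)"
            and n1: "typS G ?N3 s1 (ccons kk D)"
            by (rule typS_AppE) blast
          obtain S where S: "\<forall>s'\<in>set S. typS G ?N3 s' (ccons kk D)"
            "\<forall>\<sigma>. (\<forall>s'\<in>set S. sub_t \<sigma> s') \<longrightarrow> typS G B (TArr (Prod s1 k')) ((ccons kk D)(Suc b := Prod \<sigma> (ccons kk D (Suc b))))"
          proof -
            have "invQ G ?N3 (ccons kk D) (\<lambda>\<sigma> t. typS G B t ((ccons kk D)(Suc b := Prod \<sigma> (ccons kk D (Suc b))))) (TArr (Prod s1 k'))"
              using less[OF _, rule_format, OF _ b1] Mu C by simp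
            then show ?thesis using that unfolding invQ_def by blast
          qed
          have "typS G M (TArr kk) (D(b := Prod \<sigma> (D b)))"
            if \<sigma>: "\<forall>s'\<in>set (s1 # S). sub_t \<sigma> s'" for \<sigma>
          proof -
            have t1: "typS G B (TArr (Prod s1 k')) (ccons kk (D(b := Prod \<sigma> (D b))))"
              using S(2) \<sigma> by (simp add: ccons_upd)
            have "sub_c (ccons kk (D(b := Prod \<sigma> (D b))) a) (Prod s1 k')"
              using True sc \<sigma> by (simp add: sub_t_sub_c.c_prod)
            then show ?thesis using t1 Mu C by (simp add: SMu)
          qed
          then show "invQ G N D ?P (TArr kk)" unfolding invQ_def
            by (intro exI[of _ "s1 # S"]) (use S n1 in \<open>auto intro: bwd_n0\<close>)
        qed
      next
        case False
        have HM: "typS G (Mu (Cmd a (ssubst B (Suc b) ?N3))) t D" using H Mu C False by simp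
        show ?thesis
        proof (rule invQ_closure[where P="?P", OF HM _ PI])
          fix kk assume "typS G (Mu (Cmd a (ssubst B (Suc b) ?N3))) (TArr kk) D"
          then obtain k' where b1: "typS G (ssubst B (Suc b) ?N3) (TArr k') (ccons kk D)"
            and sc: "sub_c (ccons kk D a) k'"
            by (rule typS_MuE) auto
          obtain S where S: "\<forall>s'\<in>set S. typS G ?N3 s' (ccons kk D)"
            "\<forall>\<sigma>. (\<forall>s'\<in>set S. sub_t \<sigma> s') \<longrightarrow> typS G B (TArr k') ((ccons kk D)(Suc b := Prod \<sigma> (ccons kk D (Suc b))))"
          proof -
            have "invQ G ?N3 (ccons kk D) (\<lambda>\<sigma> t. typS G B t ((ccons kk D)(Suc b := Prod \<sigma> (ccons kk D (Suc b))))) (TArr k')"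
              using less[OF _, rule_format, OF _ b1] Mu C by simp
            then show ?thesis using that unfolding invQ_def by blast
          qed
          have "typS G M (TArr kk) (D(b := Prod \<sigma> (D b)))"
            if \<sigma>: "\<forall>s'\<in>set S. sub_t \<sigma> s'" for \<sigma>
          proof -
            have t1: "typS G B (TArr k') (ccons kk (D(b := Prod \<sigma> (D b))))"
              using S(2) \<sigma> by (simp add: ccons_upd)
            have "sub_c (ccons kk (D(b := Prod \<sigma> (D b))) a) k'"
              using False sc by (simp add: ccons_upd)
            then show ?thesis using t1 Mu C by (simp add: SMu)
          qed
          then show "invQ G N D ?P (TArr kk)" unfolding invQ_def
            by (intro exI[of _ S]) (use S in \<open>auto intro: bwd_n0\<close>)
        qed
      qed
    qed
  qed
qed


lemma bigint_typ: "typS G N s0 D \<Longrightarrow> \<forall>s\<in>set S. typS G N s D \<Longrightarrow> typS G N (foldr TInt S s0) D"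
  by (induction S) (auto intro: SInt)

lemma bigint_sub: "s \<in> set S \<Longrightarrow> sub_t (foldr TInt S s0) s"
  by (induction S) (auto intro: sub_t_sub_c.t_inter1 sub_t_sub_c.t_inter2 sub_t_sub_c.t_trans)

lemma bigint_sub0: "sub_t (foldr TInt S s0) s0"
  by (induction S) (auto intro: sub_t_sub_c.t_refl sub_t_sub_c.t_inter2 sub_t_sub_c.t_trans)

lemma beta_exp:
  assumes N: "typS G N s0 D" and H: "typS G (subst B 0 N) t D"
  shows "typS G (App (Lam B) N) t D"
proof (rule int_closure[where Q="\<lambda>t. typS G (App (Lam B) N) t D", OF _ _ H])
  fix t1 t2 assume "typS G (App (Lam B) N) t1 D" "typS G (App (Lam B) N) t2 D"
  then show "typS G (App (Lam B) N) (TInt t1 t2) D" by (rule SInt)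
next
  fix kk assume "typS G (subst B 0 N) (TArr kk) D"
  then have "invQ G N D (\<lambda>\<sigma> t. typS (ins 0 \<sigma> G) B t D) (TArr kk)"
    using inv_subst by blast
  then obtain S where S: "\<forall>s\<in>set S. typS G N s D"
    "\<forall>\<sigma>. (\<forall>s\<in>set S. sub_t \<sigma> s) \<longrightarrow> typS (ins 0 \<sigma> G) B (TArr kk) D"
    unfolding invQ_def by blast
  let ?\<sigma> = "foldr TInt S s0"
  have "typS (cons_ctx ?\<sigma> G) B (TArr kk) D" using S(2) bigint_sub by (simp add: ins0)
  then have "typS G (Lam B) (TArr (Prod ?\<sigma> kk)) D" by (rule SAbs)
  moreover have "typS G N ?\<sigma> D" using N S(1) by (rule bigint_typ)
  ultimately show "typS G (App (Lam B) N) (TArr kk) D" by (rule SApp)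
qed

lemma ccons_upd0: "(ccons kk D)(0 := x) = ccons x D"
  by (rule ext) (simp add: ccons_def split: nat.split)

lemma mu_exp:
  assumes N: "typS G N s0 D" and H: "typS G (Mu (ssubst_c C 0 (lift_n 0 N))) t D"
  shows "typS G (App (Mu C) N) t D"
proof (rule int_closure[where Q="\<lambda>t. typS G (App (Mu C) N) t D", OF _ _ H])
  fix t1 t2 assume "typS G (App (Mu C) N) t1 D" "typS G (App (Mu C) N) t2 D"
  then show "typS G (App (Mu C) N) (TInt t1 t2) D" by (rule SInt)
next
  fix kk assume HM: "typS G (Mu (ssubst_c C 0 (lift_n 0 N))) (TArr kk) D"
  obtain a B where C: "C = Cmd a B" by (cases C)
  let ?N3 = "lift_n 0 N"
  show "typS G (App (Mu C) N) (TArr kk) D"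
  proof (cases "a = 0")
    case True
    from HM C True obtain k' where bb: "typS G (App (ssubst B 0 ?N3) ?N3) (TArr k') (ccons kk D)"
      and sc: "sub_c kk k'"
      by (auto elim!: typS_MuE)
    from bb obtain s1 where b1: "typS G (ssubst B 0 ?N3) (TArr (Prod s1 k')) (ccons kk D)"
      and n1: "typS G ?N3 s1 (ccons kk D)"
      by (rule typS_AppE) blast
    have "invQ G ?N3 (ccons kk D) (\<lambda>\<sigma> t. typS G B t ((ccons kk D)(0 := Prod \<sigma> (ccons kk D 0)))) (TArr (Prod s1 k'))"
      using inv_ssubst b1 by blast
    then obtain S where S: "\<forall>s\<in>set S. typS G ?N3 s (ccons kk D)"
      "\<forall>\<sigma>. (\<forall>s\<in>set S. sub_t \<sigma> s) \<longrightarrow> typS G B (TArr (Prod s1 k')) (ccons (Prod \<sigma> kk) D)"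
      unfolding invQ_def by (auto simp: ccons_upd0)
    let ?\<sigma> = "foldr TInt (s1 # S) s0"
    have tB: "typS G B (TArr (Prod s1 k')) (ccons (Prod ?\<sigma> kk) D)"
      using S(2) bigint_sub[of _ "s1 # S"] by simp
    have "sub_c (ccons (Prod ?\<sigma> kk) D a) (Prod s1 k')"
      using True sc bigint_sub[of s1 "s1 # S" s0] by (simp add: sub_t_sub_c.c_prod)
    then have "typS G (Mu C) (TArr (Prod ?\<sigma> kk)) D" using tB C by (simp add: SMu)
    moreover have "typS G N ?\<sigma> D" using N S(1) n1 by (intro bigint_typ) (auto intro: bwd_n0)
    ultimately show ?thesis by (rule SApp)
  next
    case False
    from HM C False obtain k' where b1: "typS G (ssubst B 0 ?N3) (TArr k') (ccons kk D)"
      and sc: "sub_c (ccons kk D a) k'"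
      by (auto elim!: typS_MuE)
    have "invQ G ?N3 (ccons kk D) (\<lambda>\<sigma> t. typS G B t ((ccons kk D)(0 := Prod \<sigma> (ccons kk D 0)))) (TArr k')"
      using inv_ssubst b1 by blast
    then obtain S where S: "\<forall>s\<in>set S. typS G ?N3 s (ccons kk D)"
      "\<forall>\<sigma>. (\<forall>s\<in>set S. sub_t \<sigma> s) \<longrightarrow> typS G B (TArr k') (ccons (Prod \<sigma> kk) D)"
      unfolding invQ_def by (auto simp: ccons_upd0)
    let ?\<sigma> = "foldr TInt S s0"
    have tB: "typS G B (TArr k') (ccons (Prod ?\<sigma> kk) D)"
      using S(2) bigint_sub[of _ S] by simp
    have "sub_c (ccons (Prod ?\<sigma> kk) D a) k'"
      using False sc by (cases a) auto
    then have "typS G (Mu C) (TArr (Prod ?\<sigma> kk)) D" using tB C by (simp add: SMu)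
    moreover have "typS G N ?\<sigma> D" using N S(1) by (intro bigint_typ) (auto intro: bwd_n0)
    ultimately show ?thesis by (rule SApp)
  qed
qed


primrec apps :: "trm \<Rightarrow> trm list \<Rightarrow> trm" where
  "apps H [] = H"
| "apps H (P # Ps) = apps (App H P) Ps"

lemma apps_snoc: "apps H (Ps @ [P]) = App (apps H Ps) P"
  by (induction Ps arbitrary: H) auto

lemma app_repl:
  assumes "\<forall>t. typS G A t D \<longrightarrow> typS G B t D"
  shows "typS G (App A P) t D \<Longrightarrow> typS G (App B P) t D"
proof (rule int_closure[where Q="\<lambda>t. typS G (App B P) t D"])
  fix kk assume "typS G (App A P) (TArr kk) D"
  then show "typS G (App B P) (TArr kk) D"
    by (rule typS_AppE) (use assms in \<open>blast intro: SApp\<close>)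
qed (auto intro: SInt)

lemma apps_repl:
  "\<forall>t. typS G A t D \<longrightarrow> typS G B t D \<Longrightarrow> typS G (apps A Ps) t D \<Longrightarrow> typS G (apps B Ps) t D"
proof (induction Ps arbitrary: A B t)
  case Nil then show ?case by simp
next
  case (Cons P Ps)
  have "\<forall>t. typS G (App A P) t D \<longrightarrow> typS G (App B P) t D"
    using app_repl[OF Cons.prems(1)] by blast
  then show ?case using Cons.IH Cons.prems(2) by simp
qed

lemma apps_typ:
  "list_all2 (\<lambda>P s. typS G P s D) Ps ss \<Longrightarrow> typS G H (TArr (foldr Prod ss k)) D \<Longrightarrow> typS G (apps H Ps) (TArr k) D"
proof (induction Ps ss arbitrary: H rule: list_all2_induct)
  case Nil then show ?case by simp
next
  case (Cons P s Ps ss)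
  then show ?case by (simp add: SApp)
qed

definition finD :: "(nat \<Rightarrow> ctype) \<Rightarrow> bool" where
  "finD D \<longleftrightarrow> finite {a. \<not> sub_c Omega (D a)}"

definition tbl :: "trm \<Rightarrow> bool" where
  "tbl M \<longleftrightarrow> (\<exists>G D t. finite (dom G) \<and> finD D \<and> typS G M t D)"

definition gmerge :: "basis \<Rightarrow> basis \<Rightarrow> basis" where
  "gmerge G1 G2 = (\<lambda>x. case G1 x of None \<Rightarrow> G2 x | Some s \<Rightarrow> (case G2 x of None \<Rightarrow> Some s | Some s' \<Rightarrow> Some (TInt s s')))"

lemma merge:
  assumes "finite (dom G1)" "finD D1" "finite (dom G2)" "finD D2"
  shows "\<exists>G D. finite (dom G) \<and> finD D \<and> gle G G1 \<and> gle G G2 \<and> (\<forall>a. sub_c (D a) (D1 a)) \<and> (\<forall>a. sub_c (D a) (D2 a))"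
proof (intro exI conjI)
  have "dom (gmerge G1 G2) = dom G1 \<union> dom G2"
    by (auto simp: gmerge_def split: option.splits)
  then show "finite (dom (gmerge G1 G2))" using assms by simp
  have "{a. \<not> sub_c Omega (CInt (D1 a) (D2 a))} \<subseteq> {a. \<not> sub_c Omega (D1 a)} \<union> {a. \<not> sub_c Omega (D2 a)}"
    by (auto intro: sub_t_sub_c.c_glb)
  then show "finD (\<lambda>a. CInt (D1 a) (D2 a))" using assms unfolding finD_def by (meson finite_Un finite_subset)
  show "gle (gmerge G1 G2) G1" "gle (gmerge G1 G2) G2" unfolding gle_def gmerge_def
    by (auto split: option.splits intro: sub_t_sub_c.t_refl sub_t_sub_c.t_inter1 sub_t_sub_c.t_inter2)
  show "\<forall>a. sub_c (CInt (D1 a) (D2 a)) (D1 a)" "\<forall>a. sub_c (CInt (D1 a) (D2 a)) (D2 a)"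
    by (auto intro: sub_t_sub_c.c_inter1 sub_t_sub_c.c_inter2)
qed

lemma gle_refl: "gle G G"
  unfolding gle_def by (auto intro: sub_t_sub_c.t_refl)

lemma tbl_list:
  "\<forall>P\<in>set Ps. tbl P \<Longrightarrow> \<exists>G D ss. finite (dom G) \<and> finD D \<and> list_all2 (\<lambda>P s. typS G P s D) Ps ss"
proof (induction Ps)
  case Nil
  have "finD (\<lambda>_. Omega)" unfolding finD_def by (simp add: sub_t_sub_c.c_refl)
  then show ?case by (intro exI[of _ Map.empty] exI[of _ "\<lambda>_. Omega"] exI[of _ "[]"]) simp
next
  case (Cons P Ps)
  obtain G1 D1 ss where 1: "finite (dom G1)" "finD D1" "list_all2 (\<lambda>P s. typS G1 P s D1) Ps ss"
    using Cons by auto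
  obtain G2 D2 t where 2: "finite (dom G2)" "finD D2" "typS G2 P t D2"
    using Cons.prems unfolding tbl_def by auto
  obtain G D where m: "finite (dom G)" "finD D" "gle G G1" "gle G G2" "\<forall>a. sub_c (D a) (D1 a)" "\<forall>a. sub_c (D a) (D2 a)"
    using merge[OF 1(1,2) 2(1,2)] by blast
  have "list_all2 (\<lambda>P s. typS G P s D) Ps ss"
    using 1(3) by (rule list_all2_mono) (use m mono in blast)
  moreover have "typS G P t D" using 2(3) m mono by blast
  ultimately show ?case using m by (intro exI[of _ G] exI[of _ D] exI[of _ "t # ss"]) auto
qed

lemma tbl_var: "\<forall>P\<in>set Ps. tbl P \<Longrightarrow> tbl (apps (Var x) Ps)"
proof -
  assume "\<forall>P\<in>set Ps. tbl P"
  then obtain G D ss where 1: "finite (dom G)" "finD D" "list_all2 (\<lambda>P s. typS G P s D) Ps ss"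
    using tbl_list by blast
  let ?A = "TArr (foldr Prod ss Omega)"
  let ?s = "case G x of None \<Rightarrow> ?A | Some s \<Rightarrow> TInt s ?A"
  let ?G = "G(x := Some ?s)"
  have gl: "gle ?G G" unfolding gle_def
    by (auto intro: sub_t_sub_c.t_refl sub_t_sub_c.t_inter1)
  have "sub_t ?s ?A" by (auto split: option.split intro: sub_t_sub_c.t_refl sub_t_sub_c.t_inter2)
  then have "typS ?G (Var x) ?A D" by (intro var_any) auto
  moreover have "list_all2 (\<lambda>P s. typS ?G P s D) Ps ss"
    using 1(3) by (rule list_all2_mono) (use gl mono sub_t_sub_c.c_refl in blast)
  ultimately have "typS ?G (apps (Var x) Ps) (TArr Omega) D" using apps_typ by blast
  moreover have "finite (dom ?G)" using 1(1) by simp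
  ultimately show ?thesis using 1(2) unfolding tbl_def by blast
qed

lemma tbl_lam: "tbl B \<Longrightarrow> tbl (Lam B)"
proof -
  assume "tbl B"
  then obtain G0 D t0 where 1: "finite (dom G0)" "finD D" "typS G0 B t0 D" unfolding tbl_def by blast
  obtain k where k: "typS G0 B (TArr k) D" using has_arr[OF 1(3)] by blast
  let ?G = "\<lambda>n. G0 (Suc n)"
  let ?s = "case G0 0 of None \<Rightarrow> TArr Omega | Some s \<Rightarrow> s"
  have "gle (cons_ctx ?s ?G) G0" unfolding gle_def
    by (auto simp: cons_ctx_def split: nat.split option.split intro: sub_t_sub_c.t_refl)
  then have "typS (cons_ctx ?s ?G) B (TArr k) D" using k mono sub_t_sub_c.c_refl by blast
  then have "typS ?G (Lam B) (TArr (Prod ?s k)) D" by (rule SAbs)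
  moreover have "dom ?G = Suc -` dom G0" by auto
  then have "finite (dom ?G)" using 1(1) by (simp add: finite_vimageI)
  ultimately show ?thesis using 1(2) unfolding tbl_def by blast
qed

lemma tbl_mu: "tbl B \<Longrightarrow> tbl (Mu (Cmd a B))"
proof -
  assume "tbl B"
  then obtain G D0 t0 where 1: "finite (dom G)" "finD D0" "typS G B t0 D0" unfolding tbl_def by blast
  obtain k where k: "typS G B (TArr k) D0" using has_arr[OF 1(3)] by blast
  let ?D' = "D0(a := CInt k (D0 a))"
  let ?D = "\<lambda>n. ?D' (Suc n)"
  have e: "ccons (?D' 0) ?D = ?D'" by (rule ext) (simp add: ccons_def split: nat.split)
  have "\<forall>b. sub_c (?D' b) (D0 b)" by (auto intro: sub_t_sub_c.c_refl sub_t_sub_c.c_inter2)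
  then have "typS G B (TArr k) (ccons (?D' 0) ?D)" using k mono gle_refl e by metis
  moreover have "sub_c (ccons (?D' 0) ?D a) k" using e by (metis fun_upd_same sub_t_sub_c.c_inter1)
  ultimately have "typS G (Mu (Cmd a B)) (TArr (?D' 0)) ?D" by (rule SMu)
  moreover have "finD ?D"
  proof -
    have "{n. \<not> sub_c Omega (?D n)} \<subseteq> Suc -` insert a {n. \<not> sub_c Omega (D0 n)}" by auto
    moreover have "finite (Suc -` insert a {n. \<not> sub_c Omega (D0 n)})"
      using 1(2) unfolding finD_def by (simp add: finite_vimageI)
    ultimately show ?thesis unfolding finD_def by (rule finite_subset)
  qed
  ultimately show ?thesis using 1(1) unfolding tbl_def by blast
qed

lemma tbl_redex:
  assumes "tbl (apps R Ps)" "tbl N"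
    and exp: "\<And>G D s0 t. typS G N s0 D \<Longrightarrow> typS G R t D \<Longrightarrow> typS G X t D"
  shows "tbl (apps X Ps)"
proof -
  obtain G1 D1 t where 1: "finite (dom G1)" "finD D1" "typS G1 (apps R Ps) t D1"
    using assms(1) unfolding tbl_def by blast
  obtain G2 D2 s0 where 2: "finite (dom G2)" "finD D2" "typS G2 N s0 D2"
    using assms(2) unfolding tbl_def by blast
  obtain G D where m: "finite (dom G)" "finD D" "gle G G1" "gle G G2" "\<forall>a. sub_c (D a) (D1 a)" "\<forall>a. sub_c (D a) (D2 a)"
    using merge[OF 1(1,2) 2(1,2)] by blast
  have a: "typS G (apps R Ps) t D" using 1(3) m mono by blast
  have n: "typS G N s0 D" using 2(3) m mono by blast
  have "typS G (apps X Ps) t D"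
    by (rule apps_repl[OF _ a]) (use exp n in blast)
  then show ?thesis using m unfolding tbl_def by blast
qed

lemma tbl_final:
  assumes "tbl M"
  shows "\<exists>(G::basis) (D::namectx) d. finite (dom G) \<and> finite (dom D) \<and> typ_t G M d D"
proof -
  obtain G Dn t where 1: "finite (dom G)" "finD Dn" "typS G M t Dn" using assms unfolding tbl_def by blast
  let ?D = "\<lambda>a. if \<not> sub_c Omega (Dn a) then Some (Dn a) else None"
  have "dom ?D = {a. \<not> sub_c Omega (Dn a)}" by (auto split: if_splits)
  then have "finite (dom ?D)" using 1(2) unfolding finD_def by simp
  moreover have "\<forall>a. sub_c (dget ?D a) (Dn a)"
    by (auto simp: dget_def intro: sub_t_sub_c.c_refl)
  then have "typ_t G M t ?D" using sound 1(3) by blast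
  ultimately show ?thesis using 1(1) by blast
qed


definition sub1 :: "trm \<Rightarrow> trm \<Rightarrow> bool" where
  "sub1 y x \<longleftrightarrow> x = Lam y \<or> (\<exists>P. x = App y P) \<or> (\<exists>P. x = App P y) \<or> (\<exists>a. x = Mu (Cmd a y))"

lemma sub1_size: "sub1 y x \<Longrightarrow> size y < size x"
  unfolding sub1_def by auto

lemma subp_size: "sub1\<^sup>+\<^sup>+ y x \<Longrightarrow> size y < size x"
  by (induction rule: tranclp_induct) (auto dest: sub1_size)

lemma commute1: "sub1 S M \<Longrightarrow> red_t S S' \<Longrightarrow> \<exists>M'. red_t M M' \<and> sub1 S' M'"
  unfolding sub1_def by (auto intro: red_t_red_c.intros)

lemma commute: "sub1\<^sup>+\<^sup>+ S M \<Longrightarrow> red_t S S' \<Longrightarrow> \<exists>M'. red_t M M' \<and> sub1\<^sup>+\<^sup>+ S' M'"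
proof (induction arbitrary: S' rule: tranclp_induct)
  case (base y)
  then show ?case using commute1 by blast
next
  case (step y z)
  obtain Y' where "red_t y Y'" "sub1\<^sup>+\<^sup>+ S' Y'" using step.IH step.prems by blast
  moreover obtain M' where "red_t z M'" "sub1 Y' M'" using commute1 step.hyps(2) \<open>red_t y Y'\<close> by blast
  ultimately show ?case by (meson tranclp.trancl_into_trancl)
qed

definition Rel :: "trm \<Rightarrow> trm \<Rightarrow> bool" where
  "Rel y x \<longleftrightarrow> red_t x y \<or> sub1\<^sup>+\<^sup>+ y x"

lemma acc_Rel:
  assumes "Wellfounded.accp (\<lambda>y x. red_t x y) M"
  shows "\<forall>S. S = M \<or> sub1\<^sup>+\<^sup>+ S M \<longrightarrow> Wellfounded.accp Rel S"
  using assms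
proof (induction rule: accp_induct_rule)
  case (1 M)
  have "S = M \<or> sub1\<^sup>+\<^sup>+ S M \<Longrightarrow> Wellfounded.accp Rel S" for S
  proof (induction S rule: measure_induct_rule[of size])
    case (less S)
    show ?case
    proof (rule accpI)
      fix y assume "Rel y S"
      then consider "red_t S y" | "sub1\<^sup>+\<^sup>+ y S" unfolding Rel_def by blast
      then show "Wellfounded.accp Rel y"
      proof cases
        case 1
        show ?thesis
        proof (cases "S = M")
          case True
          then show ?thesis using "1.IH" 1 by blast
        next
          case False
          then have "sub1\<^sup>+\<^sup>+ S M" using less.prems by blast
          then obtain M' where "red_t M M'" "sub1\<^sup>+\<^sup>+ y M'" using commute 1 by blast
          then show ?thesis using "1.IH" by blast
        qed
      next
        case 2
        then have "sub1\<^sup>+\<^sup>+ y M" using less.prems by (meson tranclp_trans)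
        then show ?thesis using less.IH subp_size 2 by blast
      qed
    qed
  qed
  then show ?case by blast
qed

lemma SN_accp: "SN M \<Longrightarrow> Wellfounded.accp (\<lambda>y x. red_t x y) M"
proof (rule ccontr)
  let ?R = "\<lambda>y x. red_t x y"
  assume sn: "SN M" and na: "\<not> Wellfounded.accp ?R M"
  define nxt where "nxt x = (SOME y. red_t x y \<and> \<not> Wellfounded.accp ?R y)" for x
  have step: "\<not> Wellfounded.accp ?R x \<Longrightarrow> red_t x (nxt x) \<and> \<not> Wellfounded.accp ?R (nxt x)" for x
  proof -
    assume "\<not> Wellfounded.accp ?R x"
    then obtain z where "red_t x z" "\<not> Wellfounded.accp ?R z" by (rule not_accp_down)
    then show ?thesis unfolding nxt_def by (rule someI[where P="\<lambda>y. red_t x y \<and> \<not> Wellfounded.accp ?R y", OF conjI])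
  qed
  define f where "f i = (nxt ^^ i) M" for i
  have na_f: "\<not> Wellfounded.accp ?R (f i)" for i
    by (induction i) (auto simp: f_def na step)
  have "red_t (f i) (f (Suc i))" for i
    using step[OF na_f[of i]] by (simp add: f_def)
  moreover have "f 0 = M" by (simp add: f_def)
  ultimately show False using sn unfolding SN_def by blast
qed

lemma apps_sub_refl: "sub1\<^sup>*\<^sup>* H (apps H Ps)"
proof (induction Ps arbitrary: H)
  case Nil then show ?case by simp
next
  case (Cons P Ps)
  have "sub1 H (App H P)" by (simp add: sub1_def)
  then show ?case using Cons.IH[of "App H P"] by (simp add: converse_rtranclp_into_rtranclp)
qed

lemma apps_sub_mem: "P \<in> set Ps \<Longrightarrow> sub1\<^sup>+\<^sup>+ P (apps H Ps)"
proof (induction Ps arbitrary: H)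
  case Nil then show ?case by simp
next
  case (Cons Q Qs)
  show ?case
  proof (cases "P = Q")
    case True
    have "sub1 Q (App H Q)" by (simp add: sub1_def)
    then show ?thesis using True apps_sub_refl[of "App H Q" Qs]
      by (simp add: tranclp_rtranclp_tranclp)
  next
    case False
    then show ?thesis using Cons by simp
  qed
qed

lemma apps_red: "red_t A B \<Longrightarrow> red_t (apps A Ps) (apps B Ps)"
  by (induction Ps arbitrary: A B) (auto intro: red_t_red_c.appL)

lemma decomp: "\<exists>h Ps. M = apps h Ps \<and> (\<forall>A B. h \<noteq> App A B)"
proof (induction M rule: measure_induct_rule[of size])
  case (less M)
  show ?case
  proof (cases M)
    case (App A B)
    then obtain h Ps where "A = apps h Ps" "\<forall>A B. h \<noteq> App A B" using less[of A] by auto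
    then show ?thesis using App by (intro exI[of _ h] exI[of _ "Ps @ [B]"]) (simp add: apps_snoc)
  qed (rule exI[of _ M], rule exI[of _ "[]"], simp)+
qed

lemma main: "Wellfounded.accp Rel M \<Longrightarrow> tbl M"
proof (induction rule: accp_induct_rule)
  case (1 M)
  obtain h Ps where d: "M = apps h Ps" "\<forall>A B. h \<noteq> App A B" using decomp by blast
  have mem: "P \<in> set Ps \<Longrightarrow> tbl P" for P
    using "1.IH" apps_sub_mem d(1) unfolding Rel_def by blast
  show ?case
  proof (cases h)
    case (Var x)
    then show ?thesis using tbl_var mem d(1) by blast
  next
    case (Lam B)
    show ?thesis
    proof (cases Ps)
      case Nil
      then show ?thesis using "1.IH" d(1) Lam tbl_lam unfolding Rel_def sub1_def by auto
    next
      case (Cons N Ps')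
      have r: "red_t M (apps (subst B 0 N) Ps')" using d(1) Lam Cons by (simp add: apps_red red_t_red_c.beta)
      have "tbl (apps (subst B 0 N) Ps')" using "1.IH" r unfolding Rel_def by blast
      moreover have "tbl N" using mem Cons by simp
      ultimately have "tbl (apps (App (Lam B) N) Ps')" by (rule tbl_redex) (rule beta_exp)
      then show ?thesis using d(1) Lam Cons by simp
    qed
  next
    case (Mu C)
    obtain a B where C: "C = Cmd a B" by (cases C)
    show ?thesis
    proof (cases Ps)
      case Nil
      then show ?thesis using "1.IH" d(1) Mu C tbl_mu unfolding Rel_def sub1_def by auto
    next
      case (Cons N Ps')
      have r: "red_t M (apps (Mu (ssubst_c C 0 (lift_n 0 N))) Ps')" using d(1) Mu Cons by (simp add: apps_red red_t_red_c.mu)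
      have "tbl (apps (Mu (ssubst_c C 0 (lift_n 0 N))) Ps')" using "1.IH" r unfolding Rel_def by blast
      moreover have "tbl N" using mem Cons by simp
      ultimately have "tbl (apps (App (Mu C) N) Ps')" by (rule tbl_redex) (rule mu_exp)
      then show ?thesis using d(1) Mu Cons by simp
    qed
  next
    case (App A B)
    then show ?thesis using d(2) by blast
  qed
qed

theorem theorem6p21:
  assumes "SN M"
  shows "\<exists>(G::basis) (D::namectx) d. finite (dom G) \<and> finite (dom D) \<and> typ_t G M d D"
proof -
  have "Wellfounded.accp Rel M" using acc_Rel[OF SN_accp[OF assms]] by blast
  then show ?thesis using main tbl_final by blast
qed

end
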